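(* Every 2-regular graph $G=(V,E)$ on a finite vertex set $V$ with $|V|$ even is B-factorizable.
   Context: Let $V$ be a finite set with $|V|$ even. $K=\binom{V}{2}$ is the set of 2-element subsets of $V$. An equal partition of $V$ is an unordered pair $\{H,A\}$ of disjoint subsets with $H\cup A=V$ and $|H|=|A|=|V|/2$; $C=C(V)$ is the set of equal partitions. For $c=\{H,A\}\in C$, $B_c$ is the complete bipartite graph with parts $H$ and $A$. Vectors live in $\mathbb N^{K\cup C}$ with $\mathbb N=\{0,1,2,\dots\}$; $v|_K$ denotes the restriction to coordinates in $K$. For $E\subseteq K$, $\chi_E\in\{0,1\}^K$ is its indicator vector. For $E\subseteq K$ and $c\in C$, $\chi_{E,c}\in\mathbb N^{K\cup C}$ has $K$-components $\chi_E$ and $C$-components equal to the indicator of $c$. $PM(V)=\{\chi_{q,c}: c\in C,\ q\text{ a perfect matching of }B_c\}$. For $\mathcal M\subseteq\mathbb N^{K\cup C}$, $\mathbf N(\mathcal M)$ is the set of finite nonnegative integer combinations of elements of $\mathcal M$, and $\overline{\mathbf N}(\mathcal M)=\{v\in\mathbb N^{K\cup C}: kv\in\mathbf N(\mathcal M)\text{ for some integer }k\ge1\}$. A regular graph $G=(V,E)$ is B-factorizable if every $v\in\overline{\mathbf N}(PM(V))$ with $v|_K=\chi_E$ belongs to $\mathbf N(PM(V))$. *)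

theory Defs
  imports Main
begin

text \<open>Coordinates: Inl e for e in K (2-subsets of V), Inr c for c in C (equal partitions).
  A vector in N^(K \<union> C) is a function from coordinates to nat, vanishing outside K \<union> C.\<close>

type_synonym 'a coord = "'a set + 'a set set"
type_synonym 'a vec = "'a coord \<Rightarrow> nat"

definition Kset :: "'a set \<Rightarrow> 'a set set" where
  "Kset V = {e. e \<subseteq> V \<and> card e = 2}"

definition equal_partitions :: "'a set \<Rightarrow> 'a set set set" where
  "equal_partitions V = {{H, A} | H A. H \<subseteq> V \<and> A \<subseteq> V \<and> H \<inter> A = {} \<and> H \<union> A = V
      \<and> card H = card V div 2 \<and> card A = card V div 2}"

definition coords :: "'a set \<Rightarrow> 'a coord set" where
  "coords V = Inl ` Kset V \<union> Inr ` equal_partitions V"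

definition vecs :: "'a set \<Rightarrow> 'a vec set" where
  "vecs V = {v. \<forall>i. i \<notin> coords V \<longrightarrow> v i = 0}"

definition bip_edges :: "'a set set \<Rightarrow> 'a set set" where
  "bip_edges c = {{x, y} | x y. \<exists>H A. c = {H, A} \<and> H \<inter> A = {} \<and> x \<in> H \<and> y \<in> A}"

definition perfect_matching_of :: "'a set \<Rightarrow> 'a set set \<Rightarrow> 'a set set \<Rightarrow> bool" where
  "perfect_matching_of V F q \<longleftrightarrow> q \<subseteq> F \<and> (\<forall>x\<in>V. \<exists>!e. e \<in> q \<and> x \<in> e)"

definition chi :: "'a set set \<Rightarrow> 'a set set \<Rightarrow> 'a vec" where
  "chi E c = (\<lambda>i. case i of Inl e \<Rightarrow> (if e \<in> E then 1 else 0)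
                           | Inr d \<Rightarrow> (if d = c then 1 else 0))"

definition PM :: "'a set \<Rightarrow> 'a vec set" where
  "PM V = {chi q c | q c. c \<in> equal_partitions V \<and> perfect_matching_of V (bip_edges c) q}"

definition Ncomb :: "'a vec set \<Rightarrow> 'a vec set" where
  "Ncomb M = {v. \<exists>S (coef::'a vec \<Rightarrow> nat). finite S \<and> S \<subseteq> M \<and> (\<forall>i. v i = (\<Sum>m\<in>S. coef m * m i))}"

definition Nbar :: "'a set \<Rightarrow> 'a vec set \<Rightarrow> 'a vec set" where
  "Nbar V M = {v \<in> vecs V. \<exists>k::nat. k \<ge> 1 \<and> (\<lambda>i. k * v i) \<in> Ncomb M}"

definition B_factorizable :: "'a set \<Rightarrow> 'a set set \<Rightarrow> bool" where
  "B_factorizable V E \<longleftrightarrow>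
     (\<forall>v \<in> Nbar V (PM V).
        (\<forall>e \<in> Kset V. v (Inl e) = (if e \<in> E then 1 else 0)) \<longrightarrow> v \<in> Ncomb (PM V))"

definition two_regular :: "'a set \<Rightarrow> 'a set set \<Rightarrow> bool" where
  "two_regular V E \<longleftrightarrow> E \<subseteq> Kset V \<and> (\<forall>x\<in>V. card {e \<in> E. x \<in> e} = 2)"

end

theory Submission
  imports Defs
begin

lemma finite_Kset: "finite V \<Longrightarrow> finite (Kset V)"
  by (rule finite_subset[of _ "Pow V"]) (auto simp: Kset_def)

lemma finite_EP: "finite V \<Longrightarrow> finite (equal_partitions V)"
  by (rule finite_subset[of _ "Pow (Pow V)"]) (auto simp: equal_partitions_def)

lemma bip_sub: assumes "c \<in> equal_partitions V" shows "bip_edges c \<subseteq> Kset V"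
proof
  fix e assume "e \<in> bip_edges c"
  then obtain x y H A where e: "e = {x,y}" "c = {H,A}" "H \<inter> A = {}" "x \<in> H" "y \<in> A"
    unfolding bip_edges_def by blast
  from assms obtain H' A' where c: "c = {H',A'}" "H' \<subseteq> V" "A' \<subseteq> V"
    unfolding equal_partitions_def by blast
  have "H \<subseteq> V" "A \<subseteq> V" using e(2) c by (auto simp: doubleton_eq_iff)
  moreover have "x \<noteq> y" using e by blast
  ultimately show "e \<in> Kset V" using e by (auto simp: Kset_def)
qed

lemma chi_Inl[simp]: "chi q c (Inl e) = (if e \<in> q then 1 else 0)"
  by (simp add: chi_def)
lemma chi_Inr[simp]: "chi q c (Inr d) = (if d = c then 1 else 0)"
  by (simp add: chi_def)

lemma PM_elim:
  assumes "m \<in> PM V"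
  obtains q c where "m = chi q c" "c \<in> equal_partitions V" "q \<subseteq> bip_edges c"
    "\<forall>x\<in>V. \<exists>!e. e \<in> q \<and> x \<in> e"
  using assms unfolding PM_def perfect_matching_of_def by blast

lemma sum_ind_card: "finite A \<Longrightarrow> (\<Sum>e\<in>A. (if e \<in> B then 1 else 0::nat)) = card (A \<inter> B)"
  by (simp add: sum.If_cases)

lemma PM_vertex_sum:
  assumes "m \<in> PM V" "x \<in> V" "finite V"
  shows "(\<Sum>e\<in>{e\<in>Kset V. x \<in> e}. m (Inl e)) = 1"
proof -
  obtain q c where m: "m = chi q c" "c \<in> equal_partitions V" "q \<subseteq> bip_edges c"
    "\<forall>x\<in>V. \<exists>!e. e \<in> q \<and> x \<in> e" using PM_elim[OF assms(1)] by blast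
  have qK: "q \<subseteq> Kset V" using bip_sub[OF m(2)] m(3) by blast
  have fin: "finite {e\<in>Kset V. x \<in> e}" using finite_Kset[OF assms(3)] by simp
  obtain e0 where e0: "e0 \<in> q" "x \<in> e0" "\<And>e. e \<in> q \<Longrightarrow> x \<in> e \<Longrightarrow> e = e0"
    using m(4) assms(2) by blast
  have "{e\<in>Kset V. x \<in> e} \<inter> q = {e0}" using e0 qK by blast
  then show ?thesis using m(1) sum_ind_card[OF fin, of q] by simp
qed

lemma PM_part_sum:
  assumes "m \<in> PM V" "finite V"
  shows "(\<Sum>d\<in>equal_partitions V. m (Inr d)) = 1"
proof -
  obtain q c where m: "m = chi q c" "c \<in> equal_partitions V"
    using PM_elim[OF assms(1)] by blast
  show ?thesis using m finite_EP[OF assms(2)] by simp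
qed

lemma PM_in_vecs: assumes "m \<in> PM V" shows "m \<in> vecs V"
proof -
  obtain q c where m: "m = chi q c" "c \<in> equal_partitions V" "q \<subseteq> bip_edges c"
    using PM_elim[OF assms(1)] by blast
  have "q \<subseteq> Kset V" using bip_sub[OF m(2)] m(3) by blast
  have z: "chi q c i = 0" if "i \<notin> coords V" for i
  proof (cases i)
    case (Inl e)
    then have "e \<notin> Kset V" using that unfolding coords_def by blast
    then show ?thesis using Inl \<open>q \<subseteq> Kset V\<close> by auto
  next
    case (Inr d)
    then have "d \<noteq> c" using that m(2) unfolding coords_def by blast
    then show ?thesis using Inr by simp
  qed
  show ?thesis unfolding m(1) vecs_def by (intro CollectI allI impI z)
qed

lemma sum_eq_one_nat:
  assumes "finite A" "(\<Sum>a\<in>A. g a) = (1::nat)"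
  shows "\<exists>b\<in>A. \<forall>a\<in>A. g a = (if a = b then 1 else 0)"
proof -
  have "\<not>(\<forall>a\<in>A. g a = 0)"
  proof
    assume "\<forall>a\<in>A. g a = 0"
    then have "sum g A = 0" by simp
    with assms(2) show False by simp
  qed
  then obtain b where b: "b \<in> A" "g b \<noteq> 0" by blast
  have s: "(\<Sum>a\<in>A. g a) = g b + (\<Sum>a\<in>A-{b}. g a)"
    using assms(1) b(1) by (rule sum.remove)
  then have "g b = 1" "(\<Sum>a\<in>A-{b}. g a) = 0" using b(2) assms(2) by linarith+
  then have "\<forall>a\<in>A-{b}. g a = 0" using assms(1) by simp
  then show ?thesis using b(1) \<open>g b = 1\<close> by (intro bexI[of _ b]) auto
qed

lemma Ncomb_two:
  assumes "a \<in> M" "b \<in> M" "a \<noteq> b" "\<forall>i. v i = a i + b i"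
  shows "v \<in> Ncomb M"
proof -
  have 1: "\<forall>i. v i = (\<Sum>m\<in>{a,b}. (\<lambda>_. 1::nat) m * m i)"
  proof
    fix i show "v i = (\<Sum>m\<in>{a,b}. (\<lambda>_. 1::nat) m * m i)"
      using assms(3) assms(4) by simp
  qed
  have 2: "finite {a,b}" "{a,b} \<subseteq> M" using assms(1,2) by auto
  show ?thesis unfolding Ncomb_def
    apply (rule CollectI)
    apply (rule exI[of _ "{a,b}"])
    apply (rule exI[of _ "\<lambda>_. 1::nat"])
    using 1 2 by blast
qed

lemma EP_empty: "equal_partitions ({}::'a set) = {{{}}}"
proof (rule equalityI)
  show "equal_partitions ({}::'a set) \<subseteq> {{{}}}"
  proof
    fix c assume "c \<in> equal_partitions ({}::'a set)"
    then obtain H A :: "'a set" where "c = {H,A}" "H \<subseteq> {}" "A \<subseteq> {}"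
      unfolding equal_partitions_def by blast
    then show "c \<in> {{{}}}" by simp
  qed
  have "{{}} \<in> equal_partitions ({}::'a set)"
    unfolding equal_partitions_def
    by (rule CollectI, rule exI[of _ "{}"], rule exI[of _ "{}"]) simp
  then show "{{{}}} \<subseteq> equal_partitions ({}::'a set)" by simp
qed

lemma Kset_empty: "Kset {} = {}"
  unfolding Kset_def by auto

lemma empty_case:
  assumes "v \<in> vecs ({}::'a set)"
  shows "v \<in> Ncomb (PM ({}::'a set))"
proof -
  let ?m = "chi ({}::'a set set) {{}}"
  have m: "?m \<in> PM {}" unfolding PM_def
    apply (rule CollectI)
    apply (rule exI[of _ "{}"])
    apply (rule exI[of _ "{{}}"])
    by (simp add: perfect_matching_of_def EP_empty)
  have h: "v i = v (Inr {{}}) * ?m i" for i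
  proof (cases i)
    case (Inl e)
    then have "i \<notin> coords {}" unfolding coords_def Kset_empty EP_empty by auto
    then show ?thesis using assms Inl unfolding vecs_def by auto
  next
    case (Inr d)
    show ?thesis
    proof (cases "d = {{}}")
      case False
      then have "i \<notin> coords {}" using Inr unfolding coords_def Kset_empty EP_empty by auto
      then show ?thesis using assms Inr False unfolding vecs_def by auto
    qed (use Inr in simp)
  qed
  have 1: "\<forall>i. v i = (\<Sum>m'\<in>{?m}. (\<lambda>_. v (Inr {{}})) m' * m' i)"
  proof
    fix i
    have "v i = v (Inr {{}}) * ?m i" by (rule h)
    then show "v i = (\<Sum>m'\<in>{?m}. (\<lambda>_. v (Inr {{}})) m' * m' i)" by simp
  qed
  have 2: "finite {?m}" "{?m} \<subseteq> PM {}" using m by auto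
  show ?thesis unfolding Ncomb_def
    apply (rule CollectI)
    apply (rule exI[of _ "{?m}"])
    apply (rule exI[of _ "\<lambda>_. v (Inr {{}})"])
    using 1 2 by blast
qed

lemma core:
  assumes reg: "\<forall>x\<in>V. \<exists>e1 e2. e1 \<noteq> e2 \<and> {e\<in>E. x\<in>e} = {e1,e2}"
    and P: "P \<subseteq> E" "\<forall>x\<in>V. \<exists>!e. e\<in>P \<and> x\<in>e"
    and h: "\<forall>x\<in>V. \<forall>e1 e2. e1\<noteq>e2 \<longrightarrow> e1\<in>E \<longrightarrow> e2\<in>E \<longrightarrow> x\<in>e1 \<longrightarrow> x\<in>e2 \<longrightarrow> h e1 + h e2 = (k::nat)"
    and Q: "Q = {e\<in>E. k < 2*h e \<or> (2*h e = k \<and> e\<in>P)}"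
    and x: "x \<in> V"
  shows "\<exists>!e. e \<in> Q \<and> x\<in>e" "\<exists>!e. e \<in> E - Q \<and> x\<in>e"
proof -
  obtain e1 e2 where ee0: "e1 \<noteq> e2 \<and> {e\<in>E. x\<in>e} = {e1,e2}"
    using bspec[OF reg x] by (elim exE)
  have ee: "e1 \<noteq> e2" "\<And>e. (e \<in> E \<and> x \<in> e) = (e = e1 \<or> e = e2)"
    using ee0 by (simp, simp add: set_eq_iff)
  have E12: "e1 \<in> E" "x \<in> e1" "e2 \<in> E" "x \<in> e2" using ee(2)[of e1] ee(2)[of e2] by simp_all
  have hs: "h e1 + h e2 = k" using h[rule_format, OF x ee(1) E12(1) E12(3) E12(2) E12(4)] .
  have ex1: "\<exists>!e. e\<in>P \<and> x\<in>e" using P(2) x by blast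
  then obtain p where p: "p \<in> P" "x \<in> p" "\<And>e. e \<in> P \<Longrightarrow> x \<in> e \<Longrightarrow> e = p"
    by (elim ex1E) blast
  have "p = e1 \<or> p = e2" using p(1,2) P(1) ee(2)[of p] by blast
  then have Pe: "(e1 \<in> P) \<noteq> (e2 \<in> P)" using p ee(1) E12 by blast
  have q1: "e1 \<in> Q \<longleftrightarrow> k < 2*h e1 \<or> (2*h e1 = k \<and> e1\<in>P)" using Q E12 by simp
  have q2: "e2 \<in> Q \<longleftrightarrow> k < 2*h e2 \<or> (2*h e2 = k \<and> e2\<in>P)" using Q E12 by simp
  have d: "(e1 \<in> Q) \<noteq> (e2 \<in> Q)"
  proof (cases "e1 \<in> P")
    case True
    then have "e2 \<notin> P" using Pe by simp
    then show ?thesis unfolding q1 q2 using True hs by linarith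
  next
    case False
    then have "e2 \<in> P" using Pe by simp
    then show ?thesis unfolding q1 q2 using False hs by linarith
  qed
  have in12: "e = e1 \<or> e = e2" if "e \<in> E" "x \<in> e" for e using ee(2)[of e] that by blast
  have QE: "Q \<subseteq> E" unfolding Q by blast
  show "\<exists>!e. e \<in> Q \<and> x\<in>e"
  proof (cases "e1 \<in> Q")
    case True
    then have "e2 \<notin> Q" using d by simp
    show ?thesis
    proof (rule ex1I[of _ e1])
      show "e1 \<in> Q \<and> x \<in> e1" using True E12 by simp
      fix e assume "e \<in> Q \<and> x \<in> e"
      then show "e = e1" using in12[of e] QE \<open>e2 \<notin> Q\<close> by blast
    qed
  next
    case False
    then have "e2 \<in> Q" using d by simp
    show ?thesis
    proof (rule ex1I[of _ e2])
      show "e2 \<in> Q \<and> x \<in> e2" using \<open>e2 \<in> Q\<close> E12 by simp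
      fix e assume "e \<in> Q \<and> x \<in> e"
      then show "e = e2" using in12[of e] QE False by blast
    qed
  qed
  show "\<exists>!e. e \<in> E - Q \<and> x\<in>e"
  proof (cases "e1 \<in> Q")
    case True
    then have "e2 \<notin> Q" using d by simp
    show ?thesis
    proof (rule ex1I[of _ e2])
      show "e2 \<in> E - Q \<and> x \<in> e2" using \<open>e2 \<notin> Q\<close> E12 by simp
      fix e assume "e \<in> E - Q \<and> x \<in> e"
      then show "e = e2" using in12[of e] True by blast
    qed
  next
    case False
    show ?thesis
    proof (rule ex1I[of _ e1])
      show "e1 \<in> E - Q \<and> x \<in> e1" using False E12 by simp
      fix e assume "e \<in> E - Q \<and> x \<in> e"
      then show "e = e1" using in12[of e] d False by blast
    qed
  qed
qed

theorem mainTheorem7: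
  fixes V :: "'a set" and E :: "'a set set"
  assumes "finite V" and "even (card V)" and "two_regular V E"
  shows "B_factorizable V E"
  unfolding B_factorizable_def
proof (intro ballI impI)
  note finV = assms(1)
  have EK: "E \<subseteq> Kset V" and deg: "\<forall>x\<in>V. card {e \<in> E. x \<in> e} = 2"
    using assms(3) unfolding two_regular_def by auto
  have reg: "\<forall>x\<in>V. \<exists>e1 e2. e1 \<noteq> e2 \<and> {e\<in>E. x\<in>e} = {e1,e2}"
  proof
    fix x assume "x \<in> V"
    then have "card {e \<in> E. x \<in> e} = 2" using deg by blast
    then obtain a b where "{e \<in> E. x \<in> e} = {a,b}" "a \<noteq> b" unfolding card_2_iff by blast
    then show "\<exists>e1 e2. e1 \<noteq> e2 \<and> {e\<in>E. x\<in>e} = {e1,e2}" by blast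
  qed
  have finK: "finite (Kset V)" and finEP: "finite (equal_partitions V)"
    using finV finite_Kset finite_EP by auto
  fix v assume vN: "v \<in> Nbar V (PM V)"
    and vK: "\<forall>e\<in>Kset V. v (Inl e) = (if e \<in> E then 1 else 0)"
  from vN obtain k S coef where vvec: "v \<in> vecs V" and k1: "k \<ge> 1" and finS: "finite S"
    and SPM: "S \<subseteq> PM V" and kv: "\<forall>i. k * v i = (\<Sum>m\<in>S. coef m * m i)"
    unfolding Nbar_def Ncomb_def by auto
  show "v \<in> Ncomb (PM V)"
  proof (cases "V = {}")
    case True
    then show ?thesis using empty_case vvec by blast
  next
    case False
    then obtain x0 where x0: "x0 \<in> V" by blast
    have vout: "v i = 0" if "i \<notin> coords V" for i using vvec that unfolding vecs_def by blast
    have le_kv: "coef m * m i \<le> k * v i" if "m \<in> S" for m i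
      using member_le_sum[OF that, of "\<lambda>m. coef m * m i", OF _ finS] kv by simp
    have sumcoef: "(\<Sum>m\<in>S. coef m) = 2 * k" if x: "x \<in> V" for x
    proof -
      let ?Kx = "{e\<in>Kset V. x \<in> e}"
      have finKx: "finite ?Kx" using finK by simp
      have "(\<Sum>m\<in>S. coef m) = (\<Sum>m\<in>S. coef m * (\<Sum>e\<in>?Kx. m (Inl e)))"
        using PM_vertex_sum[OF _ x finV] SPM by (intro sum.cong) auto
      also have "\<dots> = (\<Sum>m\<in>S. \<Sum>e\<in>?Kx. coef m * m (Inl e))"
        by (simp add: sum_distrib_left)
      also have "\<dots> = (\<Sum>e\<in>?Kx. \<Sum>m\<in>S. coef m * m (Inl e))"
        by (rule sum.swap)
      also have "\<dots> = (\<Sum>e\<in>?Kx. k * (if e \<in> E then 1 else 0))"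
      proof (rule sum.cong[OF refl])
        fix e assume "e \<in> ?Kx"
        then have "e \<in> Kset V" by simp
        then have "v (Inl e) = (if e \<in> E then 1 else 0)" using vK by blast
        then show "(\<Sum>m\<in>S. coef m * m (Inl e)) = k * (if e \<in> E then 1 else 0)"
          using kv[rule_format, of "Inl e"] by simp
      qed
      also have "\<dots> = k * card (?Kx \<inter> E)"
        by (simp add: sum_distrib_left[symmetric] sum_ind_card[OF finKx])
      also have "?Kx \<inter> E = {e \<in> E. x \<in> e}" using EK by blast
      finally show ?thesis using deg x by simp
    qed
    have partsum: "(\<Sum>d\<in>equal_partitions V. v (Inr d)) = 2"
    proof -
      have "k * (\<Sum>d\<in>equal_partitions V. v (Inr d)) = (\<Sum>d\<in>equal_partitions V. \<Sum>m\<in>S. coef m * m (Inr d))"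
        by (simp add: sum_distrib_left kv)
      also have "\<dots> = (\<Sum>m\<in>S. \<Sum>d\<in>equal_partitions V. coef m * m (Inr d))"
        by (rule sum.swap)
      also have "\<dots> = (\<Sum>m\<in>S. coef m * (\<Sum>d\<in>equal_partitions V. m (Inr d)))"
        by (simp add: sum_distrib_left)
      also have "\<dots> = (\<Sum>m\<in>S. coef m)"
        using PM_part_sum[OF _ finV] SPM by (intro sum.cong) auto
      also have "\<dots> = k * 2" using sumcoef[OF x0] by simp
      finally show ?thesis using k1 by simp
    qed
    have "\<not> (\<forall>m\<in>S. coef m = 0)"
    proof
      assume "\<forall>m\<in>S. coef m = 0"
      then have "(\<Sum>m\<in>S. coef m) = 0" by simp
      then show False using sumcoef[OF x0] k1 by simp
    qed
    then obtain m0 where m0S: "m0 \<in> S" and cm0: "coef m0 \<noteq> 0" by blast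
    obtain P c1 where m0: "m0 = chi P c1" "c1 \<in> equal_partitions V" "P \<subseteq> bip_edges c1"
      "\<forall>x\<in>V. \<exists>!e. e \<in> P \<and> x \<in> e"
      using PM_elim[of m0 V] SPM m0S by blast
    have vc1: "v (Inr c1) \<ge> 1"
      using le_kv[OF m0S, of "Inr c1"] m0(1) cm0 by (cases "v (Inr c1)") auto
    define g where "g d = v (Inr d) - (if d = c1 then 1 else 0)" for d
    have gs: "(\<Sum>d\<in>equal_partitions V. g d) = 1"
    proof -
      have "(\<Sum>d\<in>equal_partitions V. g d + (if d = c1 then 1 else 0)) = 2"
      proof -
        have "(\<Sum>d\<in>equal_partitions V. g d + (if d = c1 then 1 else 0))
            = (\<Sum>d\<in>equal_partitions V. v (Inr d))"
        proof (rule sum.cong[OF refl])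
          fix d show "g d + (if d = c1 then 1 else 0) = v (Inr d)"
            using vc1 unfolding g_def by (cases "d = c1") auto
        qed
        then show ?thesis using partsum by simp
      qed
      then show ?thesis using m0(2) finEP by (simp add: sum.distrib)
    qed
    obtain c2 where c2: "c2 \<in> equal_partitions V"
      "\<forall>d\<in>equal_partitions V. g d = (if d = c2 then 1 else 0)"
      using sum_eq_one_nat[OF finEP gs] by blast
    have vC: "v (Inr d) = (if d = c1 then 1 else 0) + (if d = c2 then 1 else 0)"
      if "d \<in> equal_partitions V" for d
    proof -
      have "v (Inr d) - (if d = c1 then 1 else 0) = (if d = c2 then 1 else 0)"
        using c2(2) that unfolding g_def by blast
      then show ?thesis using vc1 by (cases "d = c1"; cases "d = c2") simp_all
    qed
    have supp: "c = c1 \<or> c = c2" if "m \<in> S" "coef m \<noteq> 0" "m = chi q c" "c \<in> equal_partitions V" for m q c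
    proof -
      have "coef m * m (Inr c) \<le> k * v (Inr c)" using le_kv[OF that(1)] .
      then have "coef m \<le> k * v (Inr c)" using that(3) by simp
      then have "v (Inr c) \<noteq> 0" using that(2) by (cases "v (Inr c)") auto
      then show ?thesis using vC[OF that(4)] by (auto split: if_splits)
    qed
    have PE: "P \<subseteq> E"
    proof
      fix e assume eP: "e \<in> P"
      have "coef m0 * m0 (Inl e) \<le> k * v (Inl e)" using le_kv[OF m0S] .
      then have "coef m0 \<le> k * v (Inl e)" using eP m0(1) by simp
      then have "v (Inl e) \<noteq> 0" using cm0 by (cases "v (Inl e)") auto
      moreover have "e \<in> Kset V" using eP m0(3) bip_sub[OF m0(2)] by blast
      ultimately show "e \<in> E" using vK by (auto split: if_splits)
    qed
    have kvE: "k * v (Inl e) = k" if "e \<in> E" for e using vK EK that by auto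
    have exm: "\<exists>m\<in>S. coef m * m (Inl e) \<noteq> 0" if "e \<in> E" for e
    proof (rule ccontr)
      assume "\<not> ?thesis"
      then have "\<forall>m\<in>S. coef m * m (Inl e) = 0" by blast
      then have "(\<Sum>m\<in>S. coef m * m (Inl e)) = 0" by (rule sum.neutral)
      then show False using kv[rule_format, of "Inl e"] kvE[OF that] k1 by simp
    qed
    obtain h where
      hv: "\<forall>x\<in>V. \<forall>e1 e2. e1\<noteq>e2 \<longrightarrow> e1\<in>E \<longrightarrow> e2\<in>E \<longrightarrow> x\<in>e1 \<longrightarrow> x\<in>e2 \<longrightarrow> h e1 + h e2 = k"
      and h1: "\<forall>e\<in>E. 0 < h e \<longrightarrow> e \<in> bip_edges c1"
      and h2: "\<forall>e\<in>E. h e < k \<longrightarrow> e \<in> bip_edges c2"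
    proof -
      have two: "(e \<in> E \<and> x \<in> e) = (e = e1 \<or> e = e2)"
        if a: "x \<in> V" "e1 \<noteq> e2" "e1 \<in> E" "e2 \<in> E" "x \<in> e1" "x \<in> e2" for x e1 e2 e
      proof -
        obtain f1 f2 where f0: "f1 \<noteq> f2 \<and> {e\<in>E. x\<in>e} = {f1,f2}"
          using bspec[OF reg a(1)] by (elim exE)
        then have f: "\<And>e. (e \<in> E \<and> x \<in> e) = (e = f1 \<or> e = f2)"
          by (simp add: set_eq_iff)
        have "e1 = f1 \<or> e1 = f2" "e2 = f1 \<or> e2 = f2" using f[of e1] f[of e2] a by auto
        then show ?thesis using f[of e] a(2) by blast
      qed
      have cases_m: "\<exists>q c. m = chi q c \<and> c \<in> equal_partitions V \<and> q \<subseteq> bip_edges c"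
        if "m \<in> S" for m
      proof -
        have "m \<in> PM V" using SPM that by blast
        then obtain q c where qc: "m = chi q c" "c \<in> equal_partitions V" "q \<subseteq> bip_edges c"
          by (rule PM_elim)
        show ?thesis by (intro exI conjI, rule qc(1), rule qc(2), rule qc(3))
      qed
      have "\<exists>h. (\<forall>x\<in>V. \<forall>e1 e2. e1\<noteq>e2 \<longrightarrow> e1\<in>E \<longrightarrow> e2\<in>E \<longrightarrow> x\<in>e1 \<longrightarrow> x\<in>e2 \<longrightarrow> h e1 + h e2 = k)
          \<and> (\<forall>e\<in>E. 0 < h e \<longrightarrow> e \<in> bip_edges c1) \<and> (\<forall>e\<in>E. h e < k \<longrightarrow> e \<in> bip_edges c2)"
      proof (cases "c1 = c2")
        case True
        define h where "h e = (if e \<in> P then k else 0)" for e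
        have "h e1 + h e2 = k"
          if a: "x \<in> V" "e1 \<noteq> e2" "e1 \<in> E" "e2 \<in> E" "x \<in> e1" "x \<in> e2" for x e1 e2
        proof -
          have "\<exists>!e. e \<in> P \<and> x \<in> e" using m0(4) a(1) by blast
          then obtain p where p: "p \<in> P" "x \<in> p" "\<And>e. e \<in> P \<Longrightarrow> x \<in> e \<Longrightarrow> e = p"
            by (elim ex1E) blast
          have "p \<in> E" "x \<in> p" using p PE by blast+
          then have "p = e1 \<or> p = e2" using two[OF a, of p] by blast
          then have "(e1 \<in> P) \<noteq> (e2 \<in> P)" using p a(2,5,6) by blast
          then show ?thesis unfolding h_def by auto
        qed
        moreover have "e \<in> bip_edges c1" if "e \<in> E" "0 < h e" for e
          using that m0(3) unfolding h_def by (auto split: if_splits)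
        moreover have "e \<in> bip_edges c2" if eE: "e \<in> E" for e
        proof -
          obtain m where m: "m \<in> S" "coef m * m (Inl e) \<noteq> 0" using exm[OF eE] by blast
          obtain q c where qc: "m = chi q c" "c \<in> equal_partitions V" "q \<subseteq> bip_edges c"
            using cases_m[OF m(1)] by blast
          have "c = c2" using supp[OF m(1) _ qc(1,2)] m(2) True by auto
          moreover have "e \<in> q" using m(2) qc(1) by (auto split: if_splits)
          ultimately show ?thesis using qc(3) by blast
        qed
        ultimately show ?thesis by blast
      next
        case False
        define h where "h e = (\<Sum>m\<in>S. coef m * m (Inr c1) * m (Inl e))" for e
        have mle: "m (Inr c1) \<le> 1" if "m \<in> S" for m
          using cases_m[OF that] by auto
        have hle: "h e \<le> k * v (Inl e)" for e
        proof -
          have "h e \<le> (\<Sum>m\<in>S. coef m * m (Inl e))" unfolding h_def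
          proof (rule sum_mono)
            fix m assume "m \<in> S"
            then have "m (Inr c1) \<le> 1" by (rule mle)
            then have "coef m * m (Inr c1) \<le> coef m * 1" by (rule mult_left_mono) simp
            then show "coef m * m (Inr c1) * m (Inl e) \<le> coef m * m (Inl e)"
              by (metis mult.right_neutral mult_right_mono zero_le)
          qed
          then show ?thesis using kv by simp
        qed
        have "h e1 + h e2 = k"
          if x: "x \<in> V" "e1 \<noteq> e2" "e1 \<in> E" "e2 \<in> E" "x \<in> e1" "x \<in> e2" for x e1 e2
        proof -
          let ?Kx = "{e\<in>Kset V. x \<in> e}"
          have finKx: "finite ?Kx" using finK by simp
          have "(\<Sum>e\<in>?Kx. h e) = (\<Sum>e\<in>?Kx. \<Sum>m\<in>S. coef m * m (Inr c1) * m (Inl e))"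
            unfolding h_def by simp
          also have "\<dots> = (\<Sum>m\<in>S. \<Sum>e\<in>?Kx. coef m * m (Inr c1) * m (Inl e))"
            by (rule sum.swap)
          also have "\<dots> = (\<Sum>m\<in>S. coef m * m (Inr c1) * (\<Sum>e\<in>?Kx. m (Inl e)))"
            by (simp add: sum_distrib_left)
          also have "\<dots> = (\<Sum>m\<in>S. coef m * m (Inr c1))"
            using PM_vertex_sum[OF _ x(1) finV] SPM by (intro sum.cong) auto
          also have "\<dots> = k * v (Inr c1)" using kv by simp
          also have "\<dots> = k" using vC[OF m0(2)] False by simp
          finally have s1: "(\<Sum>e\<in>?Kx. h e) = k" .
          have sub: "{e1,e2} \<subseteq> ?Kx" using x EK by blast
          have z: "\<forall>e\<in>?Kx - {e1,e2}. h e = 0"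
          proof
            fix e assume e: "e \<in> ?Kx - {e1,e2}"
            then have "e \<notin> E" using two[OF x, of e] by blast
            then have "v (Inl e) = 0" using vK e by auto
            then show "h e = 0" using hle[of e] by simp
          qed
          have "(\<Sum>e\<in>?Kx. h e) = (\<Sum>e\<in>{e1,e2}. h e)"
            using sum.mono_neutral_right[OF finKx sub z] .
          then show ?thesis using s1 x(2) by simp
        qed
        moreover have "e \<in> bip_edges c1" if "e \<in> E" "0 < h e" for e
        proof -
          have "\<not> (\<forall>m\<in>S. coef m * m (Inr c1) * m (Inl e) = 0)"
          proof
            assume "\<forall>m\<in>S. coef m * m (Inr c1) * m (Inl e) = 0"
            then have "h e = 0" unfolding h_def by (rule sum.neutral)
            then show False using that(2) by simp
          qed
          then obtain m where m: "m \<in> S" "coef m * m (Inr c1) * m (Inl e) \<noteq> 0" by blast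
          obtain q c where qc: "m = chi q c" "c \<in> equal_partitions V" "q \<subseteq> bip_edges c"
            using cases_m[OF m(1)] by blast
          have "c = c1" using m(2) qc(1) by (auto split: if_splits)
          moreover have "e \<in> q" using m(2) qc(1) by (auto split: if_splits)
          ultimately show ?thesis using qc(3) by blast
        qed
        moreover have "e \<in> bip_edges c2" if "e \<in> E" "h e < k" for e
        proof -
          have "\<not> (\<forall>m\<in>S. coef m * m (Inl e) \<le> coef m * m (Inr c1) * m (Inl e))"
          proof
            assume "\<forall>m\<in>S. coef m * m (Inl e) \<le> coef m * m (Inr c1) * m (Inl e)"
            then have "(\<Sum>m\<in>S. coef m * m (Inl e)) \<le> h e" unfolding h_def
              by (intro sum_mono) blast
            then show False using kv kvE[OF that(1)] that(2) by (metis not_le)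
          qed
          then obtain m where m: "m \<in> S" "coef m * m (Inr c1) * m (Inl e) < coef m * m (Inl e)"
            by (auto simp: not_le)
          obtain q c where qc: "m = chi q c" "c \<in> equal_partitions V" "q \<subseteq> bip_edges c"
            using cases_m[OF m(1)] by blast
          have "c \<noteq> c1" using m(2) qc(1) by (auto split: if_splits)
          moreover have "coef m \<noteq> 0" using m(2) by auto
          ultimately have "c = c2" using supp[OF m(1) _ qc(1,2)] by auto
          moreover have "e \<in> q" using m(2) qc(1) by (auto split: if_splits)
          ultimately show ?thesis using qc(3) by blast
        qed
        ultimately show ?thesis by blast
      qed
      then show ?thesis using that by blast
    qed
    define Q where "Q = {e\<in>E. k < 2*h e \<or> (2*h e = k \<and> e\<in>P)}"
    have Q1: "\<forall>x\<in>V. \<exists>!e. e \<in> Q \<and> x\<in>e" and Q2: "\<forall>x\<in>V. \<exists>!e. e \<in> E - Q \<and> x\<in>e"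
      using core[OF reg PE m0(4) hv Q_def] by auto
    have Qb: "Q \<subseteq> bip_edges c1"
      using h1 m0(3) unfolding Q_def by auto
    have Qb2: "E - Q \<subseteq> bip_edges c2"
      using h2 k1 unfolding Q_def by auto
    have pm1: "chi Q c1 \<in> PM V" unfolding PM_def perfect_matching_of_def
      using m0(2) Qb Q1 by blast
    have pm2: "chi (E - Q) c2 \<in> PM V" unfolding PM_def perfect_matching_of_def
      using c2(1) Qb2 Q2 by blast
    have QE: "Q \<subseteq> E" unfolding Q_def by blast
    have neq: "chi Q c1 \<noteq> chi (E - Q) c2"
    proof
      obtain e where "e \<in> Q" using Q1 x0 by blast
      moreover assume "chi Q c1 = chi (E - Q) c2"
      then have "chi Q c1 (Inl e) = chi (E - Q) c2 (Inl e)" by simp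
      ultimately show False by simp
    qed
    have "v i = chi Q c1 i + chi (E - Q) c2 i" for i
    proof (cases i)
      case (Inl e)
      show ?thesis
      proof (cases "e \<in> Kset V")
        case True
        then show ?thesis using vK Inl QE by auto
      next
        case False
        then have "i \<notin> coords V" using Inl unfolding coords_def by auto
        then show ?thesis using vout Inl False EK QE by auto
      qed
    next
      case (Inr d)
      show ?thesis
      proof (cases "d \<in> equal_partitions V")
        case True
        then show ?thesis using vC Inr by simp
      next
        case False
        then have "i \<notin> coords V" using Inr unfolding coords_def by auto
        then show ?thesis using vout Inr False m0(2) c2(1) by auto
      qed
    qed
    then show ?thesis using Ncomb_two[OF pm1 pm2 neq] by blast
  qed
qed

end
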